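(* Let $\Delta$ be a closed pure simplicial complex of dimension $m-1\ge2$ whose clique decomposition $\Delta=\Delta_1\cup\cdots\cup\Delta_r$ satisfies conditions (i) and (ii) below, and let $G_\Delta$ be its graph. Then each vertex $v_i$ of $G_\Delta$ has degree at most $\min\{|V(\Delta_i)|,\,2\dim\Delta\}$.
   Context: $\Delta$ is a pure $(m-1)$-dimensional simplicial complex on $[n]$. Clique decomposition: let $\mathcal{S}$ be the set of simplices $\Gamma$ with vertices in $[n]$, $\dim\Gamma\ge m-1$, whose $(m-1)$-skeleton is contained in $\Delta$; the maximal elements $\Gamma_1,\dots,\Gamma_r$ of $\mathcal{S}$ give the cliques $\Delta_i=\Gamma_i^{(m-1)}$, $\Delta=\Delta_1\cup\cdots\cup\Delta_r$; $V(\Delta_i)$ is the vertex set of $\Delta_i$. Conditions: (i) $|V(\Delta_i)\cap V(\Delta_j)|\le1$ for all $i<j$; (ii) $V(\Delta_i)\cap V(\Delta_j)\cap V(\Delta_k)=\emptyset$ for all $i<j<k$. For such $\Delta$, $G_\Delta$ is the simple graph on vertices $v_1,\dots,v_r$ with an edge $\{v_i,v_j\}$ ($i\ne j$) iff $V(\Delta_i)\cap V(\Delta_j)\ne\emptyset$. $\Delta$ is closed with respect to a labeling of its vertices by $[n]$ if for any two facets $F=\{a_1<\dots<a_m\}$, $G=\{b_1<\dots<b_m\}$ with $a_i=b_i$ for some $i$, every $m$-subset of $F\cup G$ is a facet of $\Delta$; $\Delta$ is closed if some labeling makes it closed. *)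

theory Defs
  imports Main
begin

definition simplicial_complex :: "nat \<Rightarrow> nat set set \<Rightarrow> bool" where
  "simplicial_complex n K \<longleftrightarrow> K \<subseteq> Pow {1..n} \<and> (\<forall>F\<in>K. \<forall>G. G \<subseteq> F \<longrightarrow> G \<in> K)"

definition facets :: "nat set set \<Rightarrow> nat set set" where
  "facets K = {F \<in> K. \<forall>G\<in>K. F \<subseteq> G \<longrightarrow> G = F}"

(* pure of dimension m-1: nonempty, every facet has exactly m vertices *)
definition pure_of_dim :: "nat \<Rightarrow> nat set set \<Rightarrow> bool" where
  "pure_of_dim m K \<longleftrightarrow> facets K \<noteq> {} \<and> (\<forall>F\<in>facets K. card F = m)"

definition closed_wrt_labeling :: "nat \<Rightarrow> nat set set \<Rightarrow> bool" where
  "closed_wrt_labeling m K \<longleftrightarrow>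
     (\<forall>F\<in>facets K. \<forall>G\<in>facets K.
        (\<exists>i<m. sorted_list_of_set F ! i = sorted_list_of_set G ! i) \<longrightarrow>
        (\<forall>H. H \<subseteq> F \<union> G \<and> card H = m \<longrightarrow> H \<in> facets K))"

definition closed_complex :: "nat \<Rightarrow> nat \<Rightarrow> nat set set \<Rightarrow> bool" where
  "closed_complex n m K \<longleftrightarrow>
     (\<exists>\<pi>. bij_betw \<pi> {1..n} {1..n} \<and> closed_wrt_labeling m ((\<lambda>F. \<pi> ` F) ` K))"

(* the set S: simplices on [n] of dimension \<ge> m-1 whose (m-1)-skeleton lies in K *)
definition clique_candidates :: "nat \<Rightarrow> nat \<Rightarrow> nat set set \<Rightarrow> nat set set" where
  "clique_candidates n m K =
     {\<Gamma>. \<Gamma> \<subseteq> {1..n} \<and> card \<Gamma> \<ge> m \<and> (\<forall>\<sigma>. \<sigma> \<subseteq> \<Gamma> \<and> card \<sigma> \<le> m \<longrightarrow> \<sigma> \<in> K)}"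

(* maximal elements \<Gamma>_1..\<Gamma>_r of S; V(\<Delta>_i) = \<Gamma>_i *)
definition cliques :: "nat \<Rightarrow> nat \<Rightarrow> nat set set \<Rightarrow> nat set set" where
  "cliques n m K = {\<Gamma> \<in> clique_candidates n m K.
      \<forall>\<Gamma>'\<in>clique_candidates n m K. \<Gamma> \<subseteq> \<Gamma>' \<longrightarrow> \<Gamma>' = \<Gamma>}"

(* degree of the vertex of G_\<Delta> corresponding to the clique \<Gamma> *)
definition clique_graph_degree :: "nat \<Rightarrow> nat \<Rightarrow> nat set set \<Rightarrow> nat set \<Rightarrow> nat" where
  "clique_graph_degree n m K \<Gamma> = card {\<Gamma>' \<in> cliques n m K. \<Gamma>' \<noteq> \<Gamma> \<and> \<Gamma> \<inter> \<Gamma>' \<noteq> {}}"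

end

theory Submission
  imports Defs
begin

lemma rank_nth:
  fixes A :: "nat set"
  assumes "finite A" "x \<in> A"
  shows "sorted_list_of_set A ! card {y\<in>A. y < x} = x"
proof -
  let ?xs = "sorted_list_of_set A"
  have st: "sorted_wrt (<) ?xs" by simp
  have ds: "distinct ?xs" by simp
  have sA: "set ?xs = A" using assms by simp
  obtain j where j: "j < length ?xs" "?xs ! j = x" using assms sA by (metis in_set_conv_nth)
  have "{y\<in>A. y < x} = set (take j ?xs)"
  proof safe
    fix y assume "y \<in> A" "y < x"
    then obtain i where i: "i < length ?xs" "?xs ! i = y" using sA by (metis in_set_conv_nth)
    have "i < j"
    proof (rule ccontr)
      assume "\<not> i < j"
      then have "j \<le> i" by simp
      then have "?xs ! j \<le> ?xs ! i" using i j sorted_nth_mono[of ?xs j i] by simp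
      then show False using \<open>y < x\<close> i j by simp
    qed
    then show "y \<in> set (take j ?xs)" using i j by (metis in_set_conv_nth length_take min_less_iff_conj nth_take)
  next
    fix y assume "y \<in> set (take j ?xs)"
    then obtain i where i: "i < j" "?xs ! i = y" using j
      by (metis in_set_conv_nth length_take min.absorb4 nth_take)
    then show "y \<in> A" using sA j by (metis nth_mem order.strict_trans)
    show "y < x" using st i j sorted_wrt_nth_less by blast
  qed
  then have "card {y\<in>A. y < x} = j" using ds j by (simp add: distinct_card)
  then show ?thesis using j by simp
qed

lemma face_in_facet:
  assumes "finite K" "H \<in> K"
  shows "\<exists>F\<in>facets K. H \<subseteq> F"
proof -
  obtain F where "F \<in> K" "H \<subseteq> F" "\<forall>b\<in>K. F \<subseteq> b \<longrightarrow> F = b"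
    using finite_has_maximal2[OF assms] by blast
  then show ?thesis unfolding facets_def by blast
qed

lemma card_m_facet:
  assumes "K \<subseteq> Pow {1..n}" "pure_of_dim m K" "G \<in> K" "card G = m"
  shows "G \<in> facets K"
proof -
  have fK: "finite K" using assms(1) by (rule finite_subset) simp
  { fix H assume H: "H \<in> K" "G \<subseteq> H"
    obtain F where F: "F \<in> facets K" "H \<subseteq> F" using face_in_facet[OF fK H(1)] by blast
    have "card F = m" using F assms(2) unfolding pure_of_dim_def by blast
    moreover have "F \<subseteq> {1..n}" using F assms(1) unfolding facets_def by auto
    then have fF: "finite F" using finite_subset by blast
    ultimately have fH: "finite H" "card H \<le> m" using finite_subset[OF F(2) fF] card_mono[OF fF F(2)] by auto
    then have "G = H" using card_seteq[OF fH(1) H(2)] assms(4) by simp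
    then have "H = G" by simp
  }
  then show ?thesis using assms(3) unfolding facets_def by blast
qed

lemma extend_subset:
  assumes "finite A" "B \<subseteq> A" "card B \<le> k" "k \<le> card A"
  shows "\<exists>S. B \<subseteq> S \<and> S \<subseteq> A \<and> card S = k"
proof -
  have "card (A - B) = card A - card B" using assms card_Diff_subset[of B A] finite_subset[of B A] by auto
  then obtain R where R: "R \<subseteq> A - B" "card R = k - card B"
    using assms obtain_subset_with_card_n[of "k - card B" "A - B"] by (metis diff_le_mono)
  have fB: "finite B" using assms finite_subset[of B A] by auto
  have fR: "finite R" using R assms finite_subset[of R A] by auto
  have "card (B \<union> R) = card B + card R" using R fB fR by (subst card_Un_disjoint) auto
  then show ?thesis using R assms by (intro exI[of _ "B \<union> R"]) auto
qed


lemma image_rank: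
  assumes "inj_on \<pi> {1..n}" "F \<subseteq> {1..n}" "x \<in> F"
  shows "card {z\<in>\<pi> ` F. z < \<pi> x} = card {y\<in>F. \<pi> y < \<pi> x}"
proof -
  have "{z\<in>\<pi> ` F. z < \<pi> x} = \<pi> ` {y\<in>F. \<pi> y < \<pi> x}" by auto
  moreover have "inj_on \<pi> {y\<in>F. \<pi> y < \<pi> x}" using assms(1,2) inj_on_subset[of \<pi> "{1..n}" "{y\<in>F. \<pi> y < \<pi> x}"] by blast
  ultimately show ?thesis by (simp add: card_image)
qed

lemma facet_image:
  assumes "inj_on \<pi> {1..n}" "K \<subseteq> Pow {1..n}" "F \<in> facets K"
  shows "\<pi> ` F \<in> facets ((\<lambda>F. \<pi> ` F) ` K)"
proof -
  have FK: "F \<in> K" using assms(3) unfolding facets_def by auto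
  { fix H assume H: "H \<in> (\<lambda>F. \<pi> ` F) ` K" "\<pi> ` F \<subseteq> H"
    then obtain H0 where H0: "H0 \<in> K" "H = \<pi> ` H0" by auto
    have H0s: "H0 \<subseteq> {1..n}" "F \<subseteq> {1..n}" using H0 FK assms(2) by auto
    have "F \<subseteq> H0"
    proof
      fix y assume "y \<in> F"
      then have "\<pi> y \<in> \<pi> ` H0" using H H0 by auto
      moreover have "y \<in> {1..n}" using \<open>y \<in> F\<close> H0s(2) by blast
      ultimately show "y \<in> H0" using inj_on_image_mem_iff[OF assms(1) _ H0s(1)] by blast
    qed
    then have "H0 = F" using assms(3) H0 unfolding facets_def by auto
    then have "H = \<pi> ` F" using H0 by simp }
  then show ?thesis using FK unfolding facets_def by auto
qed


theorem lemma3p1: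
  fixes n m :: nat and K :: "nat set set" and \<Gamma> :: "nat set"
  assumes "simplicial_complex n K"
    and "pure_of_dim m K"
    and "m - 1 \<ge> 2"
    and "closed_complex n m K"
    and cond_i: "\<forall>A\<in>cliques n m K. \<forall>B\<in>cliques n m K. A \<noteq> B \<longrightarrow> card (A \<inter> B) \<le> 1"
    and cond_ii: "\<forall>A\<in>cliques n m K. \<forall>B\<in>cliques n m K. \<forall>C\<in>cliques n m K.
                    A \<noteq> B \<and> A \<noteq> C \<and> B \<noteq> C \<longrightarrow> A \<inter> B \<inter> C = {}"
    and "\<Gamma> \<in> cliques n m K"
  shows "clique_graph_degree n m K \<Gamma> \<le> min (card \<Gamma>) (2 * (m - 1))"
proof -
  have KP: "K \<subseteq> Pow {1..n}" and down: "\<And>F G. F \<in> K \<Longrightarrow> G \<subseteq> F \<Longrightarrow> G \<in> K"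
    using assms(1) unfolding simplicial_complex_def by blast+
  obtain \<pi> where bij: "bij_betw \<pi> {1..n} {1..n}"
    and cl: "closed_wrt_labeling m ((\<lambda>F. \<pi> ` F) ` K)"
    using assms(4) unfolding closed_complex_def by blast
  have inj: "inj_on \<pi> {1..n}" using bij bij_betw_imp_inj_on by blast
  define C where "C = cliques n m K"
  define CC where "CC = clique_candidates n m K"
  have GC: "\<Gamma> \<in> CC" "\<Gamma> \<subseteq> {1..n}" "card \<Gamma> \<ge> m"
    using assms(7) unfolding C_def CC_def cliques_def clique_candidates_def by auto
  have fG: "finite \<Gamma>" using GC(2) finite_subset by blast
  define k where "k = card \<Gamma>"
  define rk where "rk x = card {y\<in>\<Gamma>. \<pi> y < \<pi> x}" for x
  have m3: "m \<ge> 3" using assms(3) by simp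
  have fCC: "finite CC" unfolding CC_def clique_candidates_def
    by (rule finite_subset[of _ "Pow {1..n}"]) auto
  have key: "rk x < m - 1 \<or> k - m < rk x"
    if x: "x \<in> \<Gamma>" and G': "\<Gamma>' \<in> C" "\<Gamma>' \<noteq> \<Gamma>" "x \<in> \<Gamma>'" for x \<Gamma>'
  proof (rule ccontr)
    assume "\<not> (rk x < m - 1 \<or> k - m < rk x)"
    then have r: "m - 1 \<le> rk x" "rk x \<le> k - m" by auto
    have G'C: "\<Gamma>' \<subseteq> {1..n}" "card \<Gamma>' \<ge> m" "\<And>\<sigma>. \<sigma> \<subseteq> \<Gamma>' \<Longrightarrow> card \<sigma> \<le> m \<Longrightarrow> \<sigma> \<in> K"
      using G' unfolding C_def cliques_def clique_candidates_def by auto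
    have fG': "finite \<Gamma>'" using G'C(1) finite_subset by blast
    obtain G where G: "{x} \<subseteq> G" "G \<subseteq> \<Gamma>'" "card G = m"
      using extend_subset[OF fG', of "{x}" m] G' G'C m3 by auto
    have GK: "G \<in> K" using G G'C by auto
    have Gf: "G \<in> facets K" using card_m_facet[OF KP assms(2) GK G(3)] .
    have fGG: "finite G" using G fG' finite_subset by blast
    define p where "p = card {y\<in>G. \<pi> y < \<pi> x}"
    have "{y\<in>G. \<pi> y < \<pi> x} \<subseteq> G - {x}" by auto
    then have "p \<le> card (G - {x})" unfolding p_def using card_mono[OF finite_Diff[OF fGG]] by blast
    then have pm: "p < m" using G fGG m3 by auto
    define L where "L = {y\<in>\<Gamma>. \<pi> y < \<pi> x}"
    define U where "U = {y\<in>\<Gamma>. \<pi> x < \<pi> y}"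
    have fL: "finite L" "finite U" using fG unfolding L_def U_def by auto
    have "\<Gamma> = L \<union> {x} \<union> U"
    proof -
      { fix y assume y: "y \<in> \<Gamma>" "y \<noteq> x"
        then have "\<pi> y \<noteq> \<pi> x" using inj x GC(2) inj_on_def by (metis subsetD)
        then have "y \<in> L \<union> U" using y unfolding L_def U_def by auto }
      then show ?thesis using x unfolding L_def U_def by auto
    qed
    moreover have "L \<inter> U = {}" "x \<notin> L" "x \<notin> U" unfolding L_def U_def by auto
    ultimately have "k = card L + 1 + card U" unfolding k_def using fL
      by (simp add: card_Un_disjoint)
    then have cLU: "card L = rk x" "card U = k - 1 - rk x" unfolding L_def rk_def by auto
    have "p \<le> card L" using cLU r pm by auto
    then obtain L' where L': "L' \<subseteq> L" "card L' = p"
      using obtain_subset_with_card_n by metis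
    have "m - 1 - p \<le> card U" using cLU r pm m3 by auto
    then obtain U' where U': "U' \<subseteq> U" "card U' = m - 1 - p"
      using obtain_subset_with_card_n by metis
    define F where "F = L' \<union> {x} \<union> U'"
    have fL': "finite L'" "finite U'" using L' U' fL finite_subset by blast+
    have "x \<notin> L'" "x \<notin> U'" "L' \<inter> U' = {}" using L' U' less_asym unfolding L_def U_def by blast+
    then have cF: "card F = m" unfolding F_def using fL' L' U' pm
      by (simp add: card_Un_disjoint)
    have FG: "F \<subseteq> \<Gamma>" using L' U' x unfolding F_def L_def U_def by auto
    have "{y\<in>F. \<pi> y < \<pi> x} = L'" using L' U' unfolding F_def L_def U_def by auto
    then have pF: "card {y\<in>F. \<pi> y < \<pi> x} = p" using L' by simp
    have FK: "F \<in> K" using FG cF GC(1) unfolding CC_def clique_candidates_def by auto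
    have Ff: "F \<in> facets K" using card_m_facet[OF KP assms(2) FK cF] .
    define K' where "K' = (\<lambda>F. \<pi> ` F) ` K"
    have F'f: "\<pi> ` F \<in> facets K'" "\<pi> ` G \<in> facets K'"
      using facet_image[OF inj KP Ff] facet_image[OF inj KP Gf] unfolding K'_def by auto
    have Fs: "F \<subseteq> {1..n}" "G \<subseteq> {1..n}" using FG GC G G'C by auto
    have xF: "x \<in> F" "x \<in> G" using G unfolding F_def by auto
    have fF: "finite F" using Fs finite_subset by blast
    have "sorted_list_of_set (\<pi> ` F) ! p = \<pi> x"
      using rank_nth[of "\<pi> ` F" "\<pi> x"] image_rank[OF inj Fs(1) xF(1)] pF fF xF by auto
    moreover have "sorted_list_of_set (\<pi> ` G) ! p = \<pi> x"
      using rank_nth[of "\<pi> ` G" "\<pi> x"] image_rank[OF inj Fs(2) xF(2)] fGG xF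
      unfolding p_def by auto
    ultimately have ex: "\<exists>i<m. sorted_list_of_set (\<pi> ` F) ! i = sorted_list_of_set (\<pi> ` G) ! i"
      using pm by auto
    have cl': "closed_wrt_labeling m K'" using cl unfolding K'_def .
    have allH0: "\<forall>H. H \<subseteq> \<pi> ` F \<union> \<pi> ` G \<and> card H = m \<longrightarrow> H \<in> facets K'"
      using cl' F'f ex unfolding closed_wrt_labeling_def by (elim ballE impE) auto
    have allH: "\<And>H. H \<subseteq> \<pi> ` F \<union> \<pi> ` G \<Longrightarrow> card H = m \<Longrightarrow> H \<in> facets K'"
      using allH0 by simp
    have FGs: "F \<union> G \<subseteq> {1..n}" using Fs by auto
    have fFG: "finite (F \<union> G)" using fF fGG by auto
    have cFG: "card (F \<union> G) \<ge> m" using cF card_mono[OF fFG, of F] by auto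
    have subK: "\<sigma> \<in> K" if s: "\<sigma> \<subseteq> F \<union> G" "card \<sigma> \<le> m" for \<sigma>
    proof -
      obtain S where S: "\<sigma> \<subseteq> S" "S \<subseteq> F \<union> G" "card S = m"
        using extend_subset[OF fFG s(1) s(2) cFG] by blast
      have Ss: "S \<subseteq> {1..n}" using S FGs by auto
      have "card (\<pi> ` S) = m" using S card_image[OF inj_on_subset[OF inj Ss]] by simp
      moreover have "\<pi> ` S \<subseteq> \<pi> ` F \<union> \<pi> ` G" using S by auto
      ultimately have "\<pi> ` S \<in> K'" using allH unfolding facets_def by blast
      then obtain H0 where H0: "H0 \<in> K" "\<pi> ` S = \<pi> ` H0" unfolding K'_def by auto
      have "H0 \<subseteq> {1..n}" using H0 KP by auto
      then have "S = H0" using inj_on_image_eq_iff[OF inj Ss] H0 by blast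
      then show ?thesis using down H0 S by blast
    qed
    have "F \<union> G \<in> CC" unfolding CC_def clique_candidates_def using FGs cFG subK by blast
    then obtain D where D: "D \<in> CC" "F \<union> G \<subseteq> D" "\<forall>b\<in>CC. D \<subseteq> b \<longrightarrow> D = b"
      using finite_has_maximal2[OF fCC] by blast
    have DC: "D \<in> C" using D unfolding C_def cliques_def CC_def by auto
    have fD: "finite D" using D unfolding CC_def clique_candidates_def using finite_subset[of D "{1..n}"] by auto
    have "F \<subseteq> D \<inter> \<Gamma>" using D FG by auto
    then have c1: "card (D \<inter> \<Gamma>) \<ge> m" using cF card_mono[of "D \<inter> \<Gamma>" F] fD by auto
    have "D = \<Gamma>"
    proof (rule ccontr)
      assume "D \<noteq> \<Gamma>"
      then have "card (D \<inter> \<Gamma>) \<le> 1" using cond_i DC assms(7) unfolding C_def by blast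
      then show False using c1 m3 by simp
    qed
    have "G \<subseteq> D \<inter> \<Gamma>'" using D G by auto
    then have c2: "card (D \<inter> \<Gamma>') \<ge> m" using G card_mono[of "D \<inter> \<Gamma>'" G] fD by auto
    have "D = \<Gamma>'"
    proof (rule ccontr)
      assume "D \<noteq> \<Gamma>'"
      then have "card (D \<inter> \<Gamma>') \<le> 1" using cond_i DC G'(1) unfolding C_def by blast
      then show False using c2 m3 by simp
    qed
    then show False using \<open>D = \<Gamma>\<close> G' by simp
  qed
  define N where "N = {\<Gamma>' \<in> C. \<Gamma>' \<noteq> \<Gamma> \<and> \<Gamma> \<inter> \<Gamma>' \<noteq> {}}"
  define T where "T = {x\<in>\<Gamma>. \<exists>\<Gamma>'\<in>C. \<Gamma>' \<noteq> \<Gamma> \<and> x \<in> \<Gamma>'}"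
  have fT: "finite T" using fG unfolding T_def by auto
  define g where "g \<Gamma>' = (SOME x. x \<in> \<Gamma> \<inter> \<Gamma>')" for \<Gamma>'
  have gN: "g \<Gamma>' \<in> \<Gamma> \<inter> \<Gamma>'" if "\<Gamma>' \<in> N" for \<Gamma>'
  proof -
    have "\<exists>x. x \<in> \<Gamma> \<inter> \<Gamma>'" using that unfolding N_def by blast
    then show ?thesis unfolding g_def by (rule someI_ex)
  qed
  have "inj_on g N"
  proof (rule inj_onI)
    fix A B assume AB: "A \<in> N" "B \<in> N" "g A = g B"
    show "A = B"
    proof (rule ccontr)
      assume "A \<noteq> B"
      moreover have "A \<in> C" "B \<in> C" "A \<noteq> \<Gamma>" "B \<noteq> \<Gamma>" using AB unfolding N_def by auto
      ultimately have "\<Gamma> \<inter> A \<inter> B = {}" using cond_ii assms(7) unfolding C_def by blast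
      moreover have "g A \<in> \<Gamma> \<inter> A \<inter> B" using gN[OF AB(1)] gN[OF AB(2)] AB(3) by auto
      ultimately show False by blast
    qed
  qed
  moreover have "g ` N \<subseteq> T" using gN unfolding T_def N_def by auto
  ultimately have NT: "card N \<le> card T" using card_inj_on_le fT by blast
  have TG: "card T \<le> card \<Gamma>" using card_mono[OF fG] unfolding T_def by auto
  have rk_inj: "inj_on rk \<Gamma>"
  proof (rule inj_onI)
    fix x y assume xy: "x \<in> \<Gamma>" "y \<in> \<Gamma>" "rk x = rk y"
    show "x = y"
    proof (rule ccontr)
      assume "x \<noteq> y"
      then have "\<pi> x \<noteq> \<pi> y" using inj xy GC(2) inj_on_def by (metis subsetD)
      then consider "\<pi> x < \<pi> y" | "\<pi> y < \<pi> x" by linarith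
      then show False
      proof cases
        case 1
        have "{z\<in>\<Gamma>. \<pi> z < \<pi> x} \<subset> {z\<in>\<Gamma>. \<pi> z < \<pi> y}" using 1 xy by auto
        then have "rk x < rk y" unfolding rk_def using fG by (simp add: psubset_card_mono)
        then show False using xy by simp
      next
        case 2
        have "{z\<in>\<Gamma>. \<pi> z < \<pi> y} \<subset> {z\<in>\<Gamma>. \<pi> z < \<pi> x}" using 2 xy by auto
        then have "rk y < rk x" unfolding rk_def using fG by (simp add: psubset_card_mono)
        then show False using xy by simp
      qed
    qed
  qed
  have rk_lt: "rk x < k" if "x \<in> \<Gamma>" for x
  proof -
    have "{z\<in>\<Gamma>. \<pi> z < \<pi> x} \<subset> \<Gamma>" using that by auto
    then show ?thesis unfolding rk_def k_def using fG by (simp add: psubset_card_mono)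
  qed
  have "rk ` T \<subseteq> {..<m - 1} \<union> {k - m<..<k}"
  proof
    fix z assume "z \<in> rk ` T"
    then obtain x where x: "x \<in> T" "z = rk x" by blast
    then obtain \<Gamma>' where "x \<in> \<Gamma>" "\<Gamma>' \<in> C" "\<Gamma>' \<noteq> \<Gamma>" "x \<in> \<Gamma>'" unfolding T_def by blast
    then have "rk x < m - 1 \<or> k - m < rk x" "rk x < k" using key rk_lt by blast+
    then show "z \<in> {..<m - 1} \<union> {k - m<..<k}" using x by auto
  qed
  then have "card (rk ` T) \<le> card ({..<m - 1} \<union> {k - m<..<k})" by (intro card_mono) auto
  also have "\<dots> \<le> card {..<m - 1} + card {k - m<..<k}" by (rule card_Un_le)
  also have "\<dots> = 2 * (m - 1)" using GC(3) unfolding k_def by simp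
  finally have "card (rk ` T) \<le> 2 * (m - 1)" .
  moreover have "card (rk ` T) = card T"
  proof -
    have "T \<subseteq> \<Gamma>" unfolding T_def by auto
    then show ?thesis using card_image[OF inj_on_subset[OF rk_inj]] by blast
  qed
  ultimately have "card T \<le> 2 * (m - 1)" by simp
  moreover have "clique_graph_degree n m K \<Gamma> = card N"
    unfolding clique_graph_degree_def N_def C_def by simp
  ultimately show ?thesis using NT TG by simp
qed

end
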